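(* Let $q$ be a prime power, $m,\eta,\ell,k\ge1$, $n=\ell\eta$, $\mu=\min\{m,\eta\}$, and integers $0\le w\le v\le\ell\mu$. Let $\alpha$ be a probability mass function on $\mathcal{W}(v,\ell,\mu)$ and let $\boldsymbol{\mathcal{F}}=\mathcal{F}_1\times\dots\times\mathcal{F}_\ell$ be drawn by first drawing $\mathbf{v}\sim\alpha$ and then each $\mathcal{F}_i$ independently and uniformly among the $v_i$-dimensional subspaces of $\mathbb{F}_q^\mu$. Let $\mathbf{y}\in\mathbb{F}_{q^m}^n$ be fixed, and let $\mathbf{c}_1,\dots,\mathbf{c}_{q^{mk}-1}$ be independent uniformly random vectors of $\mathbb{F}_{q^m}^n$ (the codewords of a random code other than the transmitted one), independent of $\boldsymbol{\mathcal{F}}$. Let $\mathcal{X}$ be the event that there exists $j$ such that $\mathrm{wt}_{\Sigma R}(\mathbf{y}-\mathbf{c}_j)=w$ and the support $\mathcal{E}'_1\times\dots\times\mathcal{E}'_\ell$ of $\mathbf{y}-\mathbf{c}_j$ satisfies $\mathcal{E}'_i\subseteq\mathcal{F}_i$ for all $i$. Then $$\Pr[\mathcal{X}]\le q^{m(k-n)}\sum_{\mathbf{w}\in\mathcal{W}(w,\ell,\mu)}\bar\varphi(\mathbf{w})\prod_{i=1}^{\ell}\mathrm{NM}_q(m,\eta,w_i),$$ where $\bar\varphi(\mathbf{w})\coloneqq\sum_{\mathbf{v}\in\mathcal{W}(v,\ell,\mu)}\alpha(\mathbf{v})\prod_{i=1}^{\ell}\Phi_\mu(w_i\subseteq v_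i)$.
   Context: Gaussian binomial: $\begin{bmatrix}a\\ b\end{bmatrix}_q=\prod_{i=0}^{b-1}\frac{q^{a-i}-1}{q^{b-i}-1}$. $\mathcal{W}(w,\ell,\mu)\coloneqq\{\mathbf{w}\in\{0,\dots,\mu\}^{\ell}:\sum_i w_i=w\}$. $\Phi_\mu(a\subseteq b)\coloneqq\begin{bmatrix}b\\ a\end{bmatrix}_q/\begin{bmatrix}\mu\\ a\end{bmatrix}_q$ if $a\le b$ and $0$ if $a>b$. $\mathrm{NM}_q(m,\eta,r)\coloneqq\prod_{j=0}^{r-1}\frac{(q^m-q^j)(q^\eta-q^j)}{q^r-q^j}$ (number of $m\times\eta$ matrices over $\mathbb{F}_q$ of rank $r$). A vector $\mathbf{x}\in\mathbb{F}_{q^m}^{n}$ is split into $\ell$ consecutive blocks of length $\eta$; via a fixed $\mathbb{F}_q$-basis of $\mathbb{F}_{q^m}$ each block is an $m\times\eta$ matrix over $\mathbb{F}_q$. The sum-rank weight $\mathrm{wt}_{\Sigma R}(\mathbf{x})$ is the sum of the ranks of these block matrices. The support of $\mathbf{x}$ is $\mathcal{E}_1\times\dots\times\mathcal{E}_\ell$, where $\mathcal{E}_i\subseteq\mathbb{F}_q^\mu$ is the row space of the $i$-th block matrix if $\eta\le m$ and its column space if $\eta>m$. *)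

theory Defs
  imports "HOL-Probability.Probability" "HOL-Library.Function_Algebras"
begin

(* Vectors of F_q^d are represented as functions nat => 'a that vanish outside {..<d}. *)
definition fscale :: "'a::field \<Rightarrow> (nat \<Rightarrow> 'a) \<Rightarrow> (nat \<Rightarrow> 'a)" where
  "fscale c v = (\<lambda>i. c * v i)"

interpretation fvs: vector_space "fscale :: 'a::field \<Rightarrow> (nat \<Rightarrow> 'a) \<Rightarrow> _"
  by unfold_locales (auto simp: fscale_def fun_eq_iff algebra_simps)

definition Fvec :: "nat \<Rightarrow> (nat \<Rightarrow> 'a::zero) set" where
  "Fvec d = {x. \<forall>i\<ge>d. x i = 0}"

definition Grass :: "nat \<Rightarrow> nat \<Rightarrow> (nat \<Rightarrow> 'a::field) set set" where
  "Grass mu d = {V. V \<subseteq> Fvec mu \<and> module.subspace fscale V \<and> vector_space.dim fscale V = d}"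

(* m x n matrices over F_q (the coordinate expansion of a vector of F_{q^m}^n w.r.t. a fixed basis);
   entry X r c, r < m, c < n; zero outside *)
definition Mats :: "nat \<Rightarrow> nat \<Rightarrow> (nat \<Rightarrow> nat \<Rightarrow> 'a::zero) set" where
  "Mats m n = {X. \<forall>r c. (m \<le> r \<or> n \<le> c) \<longrightarrow> X r c = 0}"

definition block_rows :: "nat \<Rightarrow> nat \<Rightarrow> (nat \<Rightarrow> nat \<Rightarrow> 'a::zero) \<Rightarrow> nat \<Rightarrow> (nat \<Rightarrow> 'a) set" where
  "block_rows m eta X i = (\<lambda>r. \<lambda>j. if j < eta then X r (i * eta + j) else 0) ` {..<m}"

definition block_cols :: "nat \<Rightarrow> nat \<Rightarrow> (nat \<Rightarrow> nat \<Rightarrow> 'a::zero) \<Rightarrow> nat \<Rightarrow> (nat \<Rightarrow> 'a) set" where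
  "block_cols m eta X i = (\<lambda>j. \<lambda>r. if r < m then X r (i * eta + j) else 0) ` {..<eta}"

definition block_rank :: "nat \<Rightarrow> nat \<Rightarrow> (nat \<Rightarrow> nat \<Rightarrow> 'a::field) \<Rightarrow> nat \<Rightarrow> nat" where
  "block_rank m eta X i = vector_space.dim fscale (block_rows m eta X i)"

definition wt_SR :: "nat \<Rightarrow> nat \<Rightarrow> nat \<Rightarrow> (nat \<Rightarrow> nat \<Rightarrow> 'a::field) \<Rightarrow> nat" where
  "wt_SR m eta l X = (\<Sum>i<l. block_rank m eta X i)"

definition supp_block :: "nat \<Rightarrow> nat \<Rightarrow> (nat \<Rightarrow> nat \<Rightarrow> 'a::field) \<Rightarrow> nat \<Rightarrow> (nat \<Rightarrow> 'a) set" where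
  "supp_block m eta X i =
     (if eta \<le> m then module.span fscale (block_rows m eta X i)
      else module.span fscale (block_cols m eta X i))"

definition Wset :: "nat \<Rightarrow> nat \<Rightarrow> nat \<Rightarrow> nat list set" where
  "Wset w l mu = {ws. length ws = l \<and> (\<forall>x\<in>set ws. x \<le> mu) \<and> sum_list ws = w}"

definition gauss_binom :: "nat \<Rightarrow> nat \<Rightarrow> nat \<Rightarrow> real" where
  "gauss_binom q a b = (\<Prod>i<b. (real q ^ (a - i) - 1) / (real q ^ (b - i) - 1))"

definition Phi :: "nat \<Rightarrow> nat \<Rightarrow> nat \<Rightarrow> nat \<Rightarrow> real" where
  "Phi q mu a b = (if a \<le> b then gauss_binom q b a / gauss_binom q mu a else 0)"

definition NM :: "nat \<Rightarrow> nat \<Rightarrow> nat \<Rightarrow> nat \<Rightarrow> real" where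
  "NM q m eta r = (\<Prod>j<r. (real q ^ m - real q ^ j) * (real q ^ eta - real q ^ j) / (real q ^ r - real q ^ j))"

fun seq_pmf :: "'b pmf list \<Rightarrow> 'b list pmf" where
  "seq_pmf [] = return_pmf []"
| "seq_pmf (p # ps) = do { x \<leftarrow> p; xs \<leftarrow> seq_pmf ps; return_pmf (x # xs) }"

definition exp_dist :: "nat list pmf \<Rightarrow> nat \<Rightarrow> nat \<Rightarrow> nat \<Rightarrow> nat \<Rightarrow>
     ((nat \<Rightarrow> 'a::{field,finite}) set list \<times> (nat \<Rightarrow> nat \<Rightarrow> 'a) list) pmf" where
  "exp_dist alpha mu m n N = do {
     vs \<leftarrow> alpha;
     Fs \<leftarrow> seq_pmf (map (\<lambda>d. pmf_of_set (Grass mu d)) vs);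
     cs \<leftarrow> seq_pmf (replicate N (pmf_of_set (Mats m n)));
     return_pmf (Fs, cs) }"

end

theory Submission
  imports Defs
begin

lemma prob_bind_pmf: "measure_pmf.prob (bind_pmf M f) A = (\<integral>x. measure_pmf.prob (f x) A \<partial>M)"
  unfolding measure_pmf_bind
  by (rule measure_pmf.measure_bind[where N="count_space UNIV"])
     (auto simp: space_subprob_algebra measure_pmf.subprob_space_axioms)

lemma Fvec_bij: "bij_betw (\<lambda>x. restrict x {..<d}) (Fvec d :: (nat \<Rightarrow> 'a::zero) set) (PiE {..<d} (\<lambda>_. UNIV))"
proof -
  have "inj_on (\<lambda>x. restrict x {..<d}) (Fvec d :: (nat \<Rightarrow> 'a::zero) set)"
  proof (rule inj_onI)
    fix x y :: "nat \<Rightarrow> 'a" assume "x \<in> Fvec d" "y \<in> Fvec d" "restrict x {..<d} = restrict y {..<d}"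
    then show "x = y"
    proof (intro ext)
      fix i
      assume xy: "x \<in> Fvec d" "y \<in> Fvec d" and eq: "restrict x {..<d} = restrict y {..<d}"
      show "x i = y i"
      proof (cases "i < d")
        case True then show ?thesis using fun_cong[OF eq, of i] by simp
      next
        case False then show ?thesis using xy by (auto simp: Fvec_def not_less)
      qed
    qed
  qed
  moreover have "(\<lambda>x. restrict x {..<d}) ` (Fvec d :: (nat \<Rightarrow> 'a::zero) set) = PiE {..<d} (\<lambda>_. UNIV)"
  proof (intro equalityI subsetI)
    fix f assume f: "f \<in> PiE {..<d} (\<lambda>_. UNIV :: 'a set)"
    have "(\<lambda>i. if i < d then f i else 0) \<in> Fvec d" by (auto simp: Fvec_def)
    moreover have "f = restrict (\<lambda>i. if i < d then f i else 0) {..<d}"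
      using f by (auto simp: fun_eq_iff restrict_def PiE_def extensional_def)
    ultimately show "f \<in> (\<lambda>x. restrict x {..<d}) ` Fvec d" by blast
  qed (erule imageE, simp)
  ultimately show ?thesis by (simp add: bij_betw_def)
qed

lemma finite_Fvec: "finite (Fvec d :: (nat \<Rightarrow> 'a::{finite,zero}) set)"
  using bij_betw_finite[OF Fvec_bij[where 'a='a, of d]] by (simp add: finite_PiE)

lemma card_Fvec: "card (Fvec d :: (nat \<Rightarrow> 'a::{finite,zero}) set) = CARD('a) ^ d"
  using bij_betw_same_card[OF Fvec_bij[where 'a='a, of d]] by (simp add: card_PiE)

lemma Mats_bij: "bij_betw (\<lambda>X. restrict (case_prod X) ({..<m}\<times>{..<n})) (Mats m n :: (nat \<Rightarrow> nat \<Rightarrow> 'a::zero) set)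
   (PiE ({..<m}\<times>{..<n}) (\<lambda>_. UNIV))"
proof -
  have "inj_on (\<lambda>X. restrict (case_prod X) ({..<m}\<times>{..<n})) (Mats m n :: (nat \<Rightarrow> nat \<Rightarrow> 'a::zero) set)"
  proof (rule inj_onI)
    fix x y :: "nat \<Rightarrow> nat \<Rightarrow> 'a" assume xy: "x \<in> Mats m n" "y \<in> Mats m n"
      and eq: "restrict (case_prod x) ({..<m}\<times>{..<n}) = restrict (case_prod y) ({..<m}\<times>{..<n})"
    show "x = y"
    proof (intro ext)
      fix r c
      show "x r c = y r c"
      proof (cases "r < m \<and> c < n")
        case True then show ?thesis using fun_cong[OF eq, of "(r,c)"] by (simp add: restrict_def)
      next
        case False then show ?thesis using xy by (auto simp: Mats_def not_less)
      qed
    qed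
  qed
  moreover have "(\<lambda>X. restrict (case_prod X) ({..<m}\<times>{..<n})) ` (Mats m n :: (nat \<Rightarrow> nat \<Rightarrow> 'a::zero) set) = PiE ({..<m}\<times>{..<n}) (\<lambda>_. UNIV)"
  proof (intro equalityI subsetI)
    fix f assume f: "f \<in> PiE ({..<m}\<times>{..<n}) (\<lambda>_. UNIV :: 'a set)"
    have "(\<lambda>r c. if r < m \<and> c < n then f (r,c) else 0) \<in> Mats m n" by (auto simp: Mats_def)
    moreover have "f = restrict (case_prod (\<lambda>r c. if r < m \<and> c < n then f (r,c) else 0)) ({..<m}\<times>{..<n})"
      using f by (auto simp: fun_eq_iff restrict_def PiE_def extensional_def)
    ultimately show "f \<in> (\<lambda>X. restrict (case_prod X) ({..<m}\<times>{..<n})) ` Mats m n" by blast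
  qed (erule imageE, simp)
  ultimately show ?thesis by (simp add: bij_betw_def)
qed

lemma finite_Mats: "finite (Mats m n :: (nat \<Rightarrow> nat \<Rightarrow> 'a::{finite,zero}) set)"
  using bij_betw_finite[OF Mats_bij[where 'a='a, of m n]] by (simp add: finite_PiE)

lemma card_Mats: "card (Mats m n :: (nat \<Rightarrow> nat \<Rightarrow> 'a::{finite,zero}) set) = CARD('a) ^ (m * n)"
  using bij_betw_same_card[OF Mats_bij[where 'a='a, of m n]] by (simp add: card_PiE)

lemma card_span_indep:
  fixes B :: "(nat \<Rightarrow> 'a::{field,finite}) set"
  assumes fin: "finite B" and ind: "fvs.independent B"
  shows "card (fvs.span B) = CARD('a) ^ card B"
proof -
  let ?g = "\<lambda>u. \<Sum>v\<in>B. fscale (u v) v"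
  have sp: "fvs.span B = ?g ` (PiE B (\<lambda>_. UNIV))"
  proof -
    have "fvs.span B = range ?g" by (rule fvs.span_finite[OF fin])
    also have "\<dots> = ?g ` (PiE B (\<lambda>_. UNIV))"
    proof (intro equalityI subsetI)
      fix y assume "y \<in> range ?g"
      then obtain u where y: "y = ?g u" by auto
      have "y = ?g (restrict u B)" unfolding y by (intro sum.cong) auto
      moreover have "restrict u B \<in> PiE B (\<lambda>_. UNIV)" by simp
      ultimately show "y \<in> ?g ` (PiE B (\<lambda>_. UNIV))" by blast
    qed auto
    finally show ?thesis .
  qed
  have inj: "inj_on ?g (PiE B (\<lambda>_. UNIV))"
  proof (rule inj_onI)
    fix u u' assume u: "u \<in> PiE B (\<lambda>_. UNIV)" and u': "u' \<in> PiE B (\<lambda>_. UNIV)" and eq: "?g u = ?g u'"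
    have "(\<Sum>v\<in>B. fscale (u v - u' v) v) = ?g u - ?g u'"
      unfolding fvs.scale_left_diff_distrib sum_subtractf ..
    also have "\<dots> = 0" using eq by simp
    finally have "(\<Sum>v\<in>B. fscale (u v - u' v) v) = 0" .
    then have "\<forall>v\<in>B. u v - u' v = 0"
    proof -
      assume h: "(\<Sum>v\<in>B. fscale (u v - u' v) v) = 0"
      have "\<not> (\<exists>w. (\<exists>v\<in>B. w v \<noteq> 0) \<and> (\<Sum>v\<in>B. fscale (w v) v) = 0)"
        using ind fvs.dependent_finite[OF fin] by simp
      show ?thesis
      proof (rule ccontr)
        assume "\<not> (\<forall>v\<in>B. u v - u' v = 0)"
        then have "\<exists>v\<in>B. (\<lambda>v. u v - u' v) v \<noteq> 0" by simp
        with h have "\<exists>w. (\<exists>v\<in>B. w v \<noteq> 0) \<and> (\<Sum>v\<in>B. fscale (w v) v) = 0" by (intro exI[of _ "\<lambda>v. u v - u' v"]) simp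
        with \<open>\<not> (\<exists>w. _)\<close> show False by blast
      qed
    qed
    then show "u = u'" using u u' by (auto simp: fun_eq_iff PiE_def extensional_def)
  qed
  show ?thesis unfolding sp card_image[OF inj] by (simp add: card_PiE fin)
qed

lemma card_subspace:
  fixes V :: "(nat \<Rightarrow> 'a::{field,finite}) set"
  assumes "fvs.subspace V" "finite V"
  shows "card V = CARD('a) ^ fvs.dim V"
proof -
  obtain B where B: "B \<subseteq> V" "fvs.independent B" "V \<subseteq> fvs.span B" "card B = fvs.dim V"
    by (rule fvs.basis_exists)
  have sp: "fvs.span B = V" using fvs.span_subspace[OF B(1) B(3) assms(1)] .
  have "finite B" using B(1) assms(2) by (rule finite_subset)
  then show ?thesis using card_span_indep[OF _ B(2)] sp B(4) by simp
qed

lemma indep_card_le_dim: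
  fixes B :: "(nat \<Rightarrow> 'a::{field,finite}) set"
  assumes "fvs.independent B" "B \<subseteq> V" "finite V"
  shows "card B \<le> fvs.dim V"
proof -
  obtain C where C: "C \<subseteq> V" "fvs.independent C" "V \<subseteq> fvs.span C" "card C = fvs.dim V"
    by (rule fvs.basis_exists)
  have "finite C" using C(1) assms(3) by (rule finite_subset)
  from fvs.independent_span_bound[OF this assms(1)] assms(2) C(3) C(4) show ?thesis by auto
qed

lemma dim_mono_fin:
  fixes S :: "(nat \<Rightarrow> 'a::{field,finite}) set"
  assumes "S \<subseteq> V" "finite V"
  shows "fvs.dim S \<le> fvs.dim V"
proof -
  obtain B where B: "B \<subseteq> S" "fvs.independent B" "S \<subseteq> fvs.span B" "card B = fvs.dim S"
    by (rule fvs.basis_exists)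
  then show ?thesis using indep_card_le_dim[OF B(2) _ assms(2)] assms(1) by auto
qed

lemma span_eq_if_card:
  fixes X :: "(nat \<Rightarrow> 'a::{field,finite}) set"
  assumes F: "fvs.subspace F" "finite F" and X: "X \<subseteq> F" "fvs.independent X" "card X = fvs.dim F"
  shows "fvs.span X = F"
proof (rule ccontr)
  assume ne: "fvs.span X \<noteq> F"
  have "fvs.span X \<subseteq> F" using fvs.span_minimal[OF X(1) F(1)] .
  with ne obtain y where y: "y \<in> F" "y \<notin> fvs.span X" by blast
  have fX: "finite X" using X(1) F(2) by (rule finite_subset)
  have yX: "y \<notin> X" using y(2) fvs.span_superset by blast
  have "fvs.independent (insert y X)" using fvs.independent_insertI[OF y(2) X(2)] .
  from indep_card_le_dim[OF this _ F(2)] have "card (insert y X) \<le> fvs.dim F" using y(1) X(1) by auto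
  then show False using fX yX X(3) by simp
qed

lemma dim_insert_fin:
  fixes S :: "(nat \<Rightarrow> 'a::{field,finite}) set"
  assumes fS: "finite S"
  shows "fvs.dim (insert x S) = (if x \<in> fvs.span S then fvs.dim S else Suc (fvs.dim S))"
proof (cases "x \<in> fvs.span S")
  case True
  then have "fvs.span (insert x S) = fvs.span S" by (rule fvs.span_redundant)
  then show ?thesis using True fvs.span_eq_dim by metis
next
  case False
  obtain B where B: "B \<subseteq> S" "fvs.independent B" "S \<subseteq> fvs.span B" "card B = fvs.dim S"
    by (rule fvs.basis_exists)
  have fB: "finite B" using B(1) fS by (rule finite_subset)
  have spB: "fvs.span B = fvs.span S"
    using B(1) B(3) fvs.span_mono fvs.span_span fvs.span_minimal by (metis fvs.span_eq)
  have xB: "x \<notin> fvs.span B" using False spB by simp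
  have ind: "fvs.independent (insert x B)" using fvs.independent_insertI[OF xB B(2)] .
  have "fvs.span (insert x B) = fvs.span (insert x S)"
    by (simp only: fvs.span_insert spB)
  then have "fvs.dim (insert x S) = card (insert x B)"
    using fvs.dim_eq_card[OF _ ind] by simp
  also have "\<dots> = Suc (card B)" using fB xB fvs.span_superset by (auto simp: card_insert_if)
  finally show ?thesis using False B(4) by simp
qed

lemma subspace_Fvec: "fvs.subspace (Fvec d :: (nat \<Rightarrow> 'a::field) set)"
  unfolding fvs.subspace_def Fvec_def fscale_def by auto

lemma card_field_gt1: "CARD('a::{field,finite}) > 1"
proof -
  have "card {0::'a, 1} \<le> CARD('a)" by (rule card_mono) auto
  then show ?thesis by simp
qed

lemma dim_Fvec: "fvs.dim (Fvec d :: (nat \<Rightarrow> 'a::{field,finite}) set) = d"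
proof -
  have "CARD('a) ^ d = CARD('a) ^ fvs.dim (Fvec d :: (nat \<Rightarrow> 'a) set)"
    using card_subspace[OF subspace_Fvec finite_Fvec] card_Fvec by metis
  moreover have "CARD('a) > 1" using card_field_gt1 .
  ultimately show ?thesis by (simp add: power_inject_exp)
qed

definition Ext :: "(nat \<Rightarrow> 'a::field) set \<Rightarrow> (nat \<Rightarrow> 'a) list \<Rightarrow> nat \<Rightarrow> (nat \<Rightarrow> 'a) list set" where
  "Ext V bs k = {cs. length cs = k \<and> set cs \<subseteq> V \<and> distinct (bs @ cs) \<and> fvs.independent (set (bs @ cs))}"

lemma finite_Ext: "finite V \<Longrightarrow> finite (Ext V bs k)"
  by (rule finite_subset[OF _ finite_lists_length_eq[of V k]]) (auto simp: Ext_def)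

lemma Ext_0: "distinct bs \<Longrightarrow> fvs.independent (set bs) \<Longrightarrow> Ext V bs 0 = {[]}"
  by (auto simp: Ext_def)

lemma Ext_Suc:
  "Ext V bs (Suc k) = (\<Union>x\<in>V - fvs.span (set bs). (#) x ` Ext V (bs @ [x]) k)"
proof (intro equalityI subsetI)
  fix cs assume cs: "cs \<in> Ext V bs (Suc k)"
  then obtain x cs' where c: "cs = x # cs'" by (cases cs) (auto simp: Ext_def)
  have ind: "fvs.independent (insert x (set bs \<union> set cs'))" and d: "distinct (bs @ x # cs')"
    using cs c by (auto simp: Ext_def)
  have xn: "x \<notin> set bs \<union> set cs'" using d by auto
  have "x \<notin> fvs.span (set bs \<union> set cs')" using ind xn fvs.independent_insert[of x "set bs \<union> set cs'"] by simp
  then have "x \<notin> fvs.span (set bs)" using fvs.span_mono[of "set bs" "set bs \<union> set cs'"] by blast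
  moreover have "x \<in> V" using cs c by (auto simp: Ext_def)
  moreover have "cs' \<in> Ext V (bs @ [x]) k" using cs c by (auto simp: Ext_def)
  ultimately show "cs \<in> (\<Union>x\<in>V - fvs.span (set bs). (#) x ` Ext V (bs @ [x]) k)" using c by blast
next
  fix cs assume "cs \<in> (\<Union>x\<in>V - fvs.span (set bs). (#) x ` Ext V (bs @ [x]) k)"
  then obtain x cs' where "x \<in> V" "cs' \<in> Ext V (bs @ [x]) k" "cs = x # cs'" by blast
  then show "cs \<in> Ext V bs (Suc k)" by (auto simp: Ext_def)
qed

lemma card_Ext:
  fixes V :: "(nat \<Rightarrow> 'a::{field,finite}) set"
  assumes V: "fvs.subspace V" "finite V"
  shows "set bs \<subseteq> V \<Longrightarrow> distinct bs \<Longrightarrow> fvs.independent (set bs) \<Longrightarrow>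
    card (Ext V bs k) = (\<Prod>i<k. CARD('a) ^ fvs.dim V - CARD('a) ^ (length bs + i))"
proof (induction k arbitrary: bs)
  case 0
  then show ?case by (simp add: Ext_0)
next
  case (Suc k)
  let ?q = "CARD('a)" and ?d = "fvs.dim V"
  let ?P = "\<lambda>a. (\<Prod>i<k. ?q ^ ?d - ?q ^ (a + i))"
  have each: "card ((#) x ` Ext V (bs @ [x]) k) = ?P (Suc (length bs))" if x: "x \<in> V - fvs.span (set bs)" for x
  proof -
    have "x \<notin> set bs" using x fvs.span_superset by blast
    moreover have "fvs.independent (insert x (set bs))" using fvs.independent_insertI x Suc.prems(3) by blast
    ultimately have "card (Ext V (bs @ [x]) k) = ?P (Suc (length bs))"
      using Suc.IH[of "bs @ [x]"] Suc.prems x by simp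
    then show ?thesis by (simp add: card_image)
  qed
  have "card (Ext V bs (Suc k)) = (\<Sum>x\<in>V - fvs.span (set bs). card ((#) x ` Ext V (bs @ [x]) k))"
    unfolding Ext_Suc
    by (rule card_UN_disjoint) (auto simp: finite_Ext V(2))
  also have "\<dots> = card (V - fvs.span (set bs)) * ?P (Suc (length bs))"
    using each by simp
  also have "card (V - fvs.span (set bs)) = ?q ^ ?d - ?q ^ length bs"
  proof -
    have sub: "fvs.span (set bs) \<subseteq> V" using fvs.span_minimal[OF Suc.prems(1) V(1)] .
    have "card (fvs.span (set bs)) = ?q ^ length bs"
      using card_span_indep[OF _ Suc.prems(3)] Suc.prems(2) by (simp add: distinct_card)
    then show ?thesis using card_Diff_subset[OF finite_subset[OF sub V(2)] sub] card_subspace[OF V] by simp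
  qed
  also have "(?q ^ ?d - ?q ^ length bs) * ?P (Suc (length bs)) = (\<Prod>i<Suc k. ?q ^ ?d - ?q ^ (length bs + i))"
    by (simp only: prod.lessThan_Suc_shift add_0_right add_Suc_shift)
  finally show ?case .
qed

lemma finite_Grass: "finite (Grass mu v :: (nat \<Rightarrow> 'a::{field,finite}) set set)"
proof -
  have "Grass mu v \<subseteq> Pow (Fvec mu :: (nat \<Rightarrow> 'a) set)" by (auto simp: Grass_def)
  then show ?thesis using finite_Fvec by (metis finite_Pow_iff finite_subset)
qed

lemma grass_count:
  fixes E :: "(nat \<Rightarrow> 'a::{field,finite}) set"
  assumes E: "fvs.subspace E" "E \<subseteq> Fvec mu" "fvs.dim E = w" and wv: "w \<le> v"
  shows "card {F \<in> Grass mu v. E \<subseteq> F} * (\<Prod>i<v-w. CARD('a) ^ v - CARD('a) ^ (w + i))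
       = (\<Prod>i<v-w. CARD('a) ^ mu - CARD('a) ^ (w + i))"
proof -
  let ?q = "CARD('a)"
  obtain B where B: "B \<subseteq> E" "fvs.independent B" "E \<subseteq> fvs.span B" "card B = fvs.dim E"
    by (rule fvs.basis_exists)
  have fB: "finite B" using B(1) E(2) finite_Fvec by (metis finite_subset)
  obtain bs where bs: "set bs = B" "distinct bs" using finite_distinct_list[OF fB] by blast
  have lbs: "length bs = w" using bs B(4) E(3) distinct_card by metis
  define L where "L = Ext (Fvec mu) bs (v - w)"
  define T where "T = {F \<in> Grass mu v. E \<subseteq> F}"
  define sp where "sp cs = fvs.span (set (bs @ cs))" for cs
  have bsF: "set bs \<subseteq> Fvec mu" using bs B(1) E(2) by auto
  have cardL: "card L = (\<Prod>i<v-w. ?q ^ mu - ?q ^ (w + i))"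
  proof -
    have dF: "fvs.dim (Fvec mu :: (nat \<Rightarrow> 'a) set) = mu" by (rule dim_Fvec)
    show ?thesis
      unfolding L_def using card_Ext[OF subspace_Fvec finite_Fvec bsF bs(2), of "v - w"] bs B(2) lbs
      by (simp add: dF)
  qed
  have c1: "sp cs \<in> T" if cs: "cs \<in> L" for cs
  proof -
    have cs': "length cs = v - w" "set cs \<subseteq> Fvec mu" "distinct (bs @ cs)" "fvs.independent (set (bs @ cs))"
      using cs by (auto simp: L_def Ext_def)
    have "sp cs \<subseteq> Fvec mu" unfolding sp_def using cs'(2) bsF by (intro fvs.span_minimal subspace_Fvec) auto
    moreover have "fvs.dim (sp cs) = v"
      unfolding sp_def fvs.dim_span_eq_card_independent[OF cs'(4)] distinct_card[OF cs'(3)]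
      using cs'(1) lbs wv by simp
    moreover have "E \<subseteq> sp cs" unfolding sp_def using B(3) bs(1) fvs.span_mono[of "set bs" "set (bs @ cs)"] by auto
    moreover have "fvs.subspace (sp cs)" unfolding sp_def by simp
    ultimately show ?thesis unfolding T_def Grass_def by auto
  qed
  have c2: "{cs \<in> L. sp cs = F} = Ext F bs (v - w)" if F: "F \<in> T" for F
  proof (intro equalityI subsetI)
    fix cs assume "cs \<in> {cs \<in> L. sp cs = F}"
    then show "cs \<in> Ext F bs (v - w)" unfolding L_def Ext_def sp_def using fvs.span_superset by fastforce
  next
    fix cs assume cs: "cs \<in> Ext F bs (v - w)"
    have F': "F \<subseteq> Fvec mu" "fvs.subspace F" "fvs.dim F = v" "E \<subseteq> F" using F by (auto simp: T_def Grass_def)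
    have cs': "length cs = v - w" "set cs \<subseteq> F" "distinct (bs @ cs)" "fvs.independent (set (bs @ cs))"
      using cs by (auto simp: Ext_def)
    have "cs \<in> L" using cs cs'(2) F'(1) by (auto simp: L_def Ext_def)
    moreover have "sp cs = F" unfolding sp_def
    proof (rule span_eq_if_card[OF F'(2) finite_subset[OF F'(1) finite_Fvec] _ cs'(4)])
      show "set (bs @ cs) \<subseteq> F" using cs'(2) bs(1) B(1) F'(4) by auto
      show "card (set (bs @ cs)) = fvs.dim F" using distinct_card[OF cs'(3)] cs'(1) lbs wv F'(3) by simp
    qed
    ultimately show "cs \<in> {cs \<in> L. sp cs = F}" by simp
  qed
  have c3: "card (Ext F bs (v - w)) = (\<Prod>i<v-w. ?q ^ v - ?q ^ (w + i))" if F: "F \<in> T" for F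
  proof -
    have F': "F \<subseteq> Fvec mu" "fvs.subspace F" "fvs.dim F = v" "E \<subseteq> F" using F by (auto simp: T_def Grass_def)
    have "set bs \<subseteq> F" using bs(1) B(1) F'(4) by auto
    from card_Ext[OF F'(2) finite_subset[OF F'(1) finite_Fvec] this bs(2)] show ?thesis
      using bs B(2) lbs F'(3) by simp
  qed
  have fT: "finite T" unfolding T_def by (rule finite_subset[OF _ finite_Grass]) auto
  have fL: "finite L" unfolding L_def by (rule finite_Ext[OF finite_Fvec])
  have "card L = (\<Sum>F\<in>T. card {cs \<in> L. sp cs = F})"
  proof -
    have "(\<Sum>F\<in>T. \<Sum>x\<in>{x \<in> L. sp x = F}. (1::nat)) = (\<Sum>x\<in>L. 1)"
      by (rule sum.group[OF fL fT]) (use c1 in blast)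
    then show ?thesis by simp
  qed
  also have "\<dots> = (\<Sum>F\<in>T. (\<Prod>i<v-w. ?q ^ v - ?q ^ (w + i)))"
    by (intro sum.cong refl) (simp add: c2 c3)
  also have "\<dots> = card T * (\<Prod>i<v-w. ?q ^ v - ?q ^ (w + i))" by simp
  finally show ?thesis using cardL unfolding T_def by (rule trans[OF sym])
qed

lemma prod_split_nat: "(\<Prod>i<w+k. f i) = (\<Prod>i<w. f i) * (\<Prod>i<k. f (w + i :: nat)) " for f :: "nat \<Rightarrow> 'b::comm_monoid_mult"
  by (induction k) (simp_all add: mult.assoc)

lemma qpow_diff_pos: "b < a \<Longrightarrow> (0::real) < real q ^ a - real q ^ b" if "q > 1"
  using that by (simp add: power_strict_increasing)

lemma real_prod_diff:
  assumes "q > 1" "b + c \<le> a"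
  shows "real (\<Prod>i<c. q ^ a - q ^ (b + i)) = (\<Prod>i<c. real q ^ a - real q ^ (b + i))"
proof -
  have "q ^ (b + i) \<le> q ^ a" if "i < c" for i
    using assms that by (intro power_increasing) auto
  then show ?thesis by (simp add: of_nat_diff)
qed

lemma real_prod_diff0:
  assumes "q > 1" "c \<le> a"
  shows "real (\<Prod>i<c. q ^ a - q ^ i) = (\<Prod>i<c. real q ^ a - real q ^ i)"
  using real_prod_diff[OF assms(1), of 0 c a] assms(2) by simp

lemma prod_qdiff_pos: "q > 1 \<Longrightarrow> b + c \<le> a \<Longrightarrow> (0::real) < (\<Prod>i<c. real q ^ a - real q ^ (b + i))"
  by (intro prod_pos) (auto intro: qpow_diff_pos)

lemma Phi_eq:
  assumes q: "q > 1" and wv: "w \<le> v" and vm: "v \<le> mu"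
  shows "Phi q mu w v = (\<Prod>i<w. real q ^ v - real q ^ i) / (\<Prod>i<w. real q ^ mu - real q ^ i)"
proof -
  have split: "real q ^ a - real q ^ i = real q ^ i * (real q ^ (a - i) - 1)" if "i \<le> a" for a i
    using that by (simp add: algebra_simps flip: power_add)
  have "(\<Prod>i<w. real q ^ v - real q ^ i) = (\<Prod>i<w. real q ^ i) * (\<Prod>i<w. real q ^ (v - i) - 1)"
    using wv by (simp add: split prod.distrib)
  moreover have "(\<Prod>i<w. real q ^ mu - real q ^ i) = (\<Prod>i<w. real q ^ i) * (\<Prod>i<w. real q ^ (mu - i) - 1)"
    using wv vm by (simp add: split prod.distrib)
  moreover have "(\<Prod>i<w. real q ^ i) \<noteq> 0" using q by simp
  moreover have d: "(\<Prod>i<w. real q ^ (w - i) - 1) \<noteq> 0"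
  proof -
    have "real q ^ (w - i) \<noteq> 1" if "i < w" for i
      using q that by (metis less_numeral_extra(4) of_nat_1 of_nat_less_iff one_less_power zero_less_diff of_nat_power)
    then show ?thesis by (simp add: prod_zero_iff)
  qed
  ultimately show ?thesis
    using wv q unfolding Phi_def gauss_binom_def by (simp add: prod_dividef)
qed

lemma zero_subspace: "fvs.subspace {0 :: nat \<Rightarrow> 'a::field}" and dim_zero_sp: "fvs.dim {0 :: nat \<Rightarrow> 'a::field} = 0"
proof -
  have e: "fvs.span {} = {0 :: nat \<Rightarrow> 'a}" by simp
  show "fvs.subspace {0 :: nat \<Rightarrow> 'a::field}" using fvs.subspace_span[of "{}"] e by simp
  show "fvs.dim {0 :: nat \<Rightarrow> 'a::field} = 0"
    using fvs.dim_span[of "{} :: (nat \<Rightarrow> 'a) set"] fvs.dim_eq_card_independent[OF fvs.independent_empty] e by simp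
qed

lemma grass_count0:
  assumes vm: "v \<le> mu"
  shows "card (Grass mu v :: (nat \<Rightarrow> 'a::{field,finite}) set set) * (\<Prod>i<v. CARD('a) ^ v - CARD('a) ^ i)
       = (\<Prod>i<v. CARD('a) ^ mu - CARD('a) ^ i)"
proof -
  have z: "{0} \<subseteq> Fvec mu" by (auto simp: Fvec_def)
  have "{F \<in> Grass mu v. {0 :: nat \<Rightarrow> 'a} \<subseteq> F} = Grass mu v"
    by (auto simp: Grass_def fvs.subspace_0)
  then show ?thesis using grass_count[OF zero_subspace[where 'a='a] z dim_zero_sp[where 'a='a], of v] by simp
qed

lemma grass_nonempty:
  assumes vm: "v \<le> mu"
  shows "(Grass mu v :: (nat \<Rightarrow> 'a::{field,finite}) set set) \<noteq> {}"
proof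
  assume "(Grass mu v :: (nat \<Rightarrow> 'a::{field,finite}) set set) = {}"
  then have "(\<Prod>i<v. CARD('a) ^ mu - CARD('a) ^ i) = 0" using grass_count0[OF vm, where 'a='a] by simp
  moreover have "(\<Prod>i<v. CARD('a) ^ mu - CARD('a) ^ i) > 0"
  proof -
    have h: "CARD('a) ^ i < CARD('a) ^ mu" if "i < v" for i
      by (rule power_strict_increasing) (use vm card_field_gt1[where 'a='a] that in auto)
    show ?thesis
    proof (rule prod_pos)
      fix i assume "i \<in> {..<v}" then show "0 < CARD('a) ^ mu - CARD('a) ^ i" using h by simp
    qed
  qed
  ultimately show False by linarith
qed

lemma grass_prob:
  fixes E :: "(nat \<Rightarrow> 'a::{field,finite}) set"
  assumes E: "fvs.subspace E" "E \<subseteq> Fvec mu" "fvs.dim E = w" and vm: "v \<le> mu"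
  shows "measure_pmf.prob (pmf_of_set (Grass mu v)) {F. E \<subseteq> F} = Phi CARD('a) mu w v"
proof -
  let ?q = "CARD('a)"
  have q: "?q > 1" by (rule card_field_gt1)
  let ?G = "Grass mu v :: (nat \<Rightarrow> 'a) set set"
  let ?T = "{F \<in> ?G. E \<subseteq> F}"
  have prob: "measure_pmf.prob (pmf_of_set ?G) {F. E \<subseteq> F} = real (card ?T) / real (card ?G)"
  proof -
    have eq: "?G \<inter> {F. E \<subseteq> F} = ?T" by auto
    show ?thesis by (subst measure_pmf_of_set[OF grass_nonempty[OF vm] finite_Grass]) (simp only: eq)
  qed
  show ?thesis
  proof (cases "w \<le> v")
    case False
    have "?T = {}"
    proof (rule ccontr)
      assume "?T \<noteq> {}"
      then obtain F where F: "F \<in> ?G" "E \<subseteq> F" by blast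
      have "fvs.dim E \<le> fvs.dim F"
        using F by (intro dim_mono_fin) (auto simp: Grass_def intro: finite_subset[OF _ finite_Fvec])
      then show False using F False E(3) by (simp add: Grass_def)
    qed
    then have c: "card ?T = 0" by (simp only: card.empty)
    show ?thesis using prob False c by (simp add: Phi_def)
  next
    case wv: True
    define A where "A = (\<Prod>i<w. real ?q ^ v - real ?q ^ i)"
    define B where "B = (\<Prod>i<w. real ?q ^ mu - real ?q ^ i)"
    define Pa where "Pa = (\<Prod>i<v-w. real ?q ^ v - real ?q ^ (w + i))"
    define Qa where "Qa = (\<Prod>i<v-w. real ?q ^ mu - real ?q ^ (w + i))"
    define Pb where "Pb = (\<Prod>i<v. real ?q ^ v - real ?q ^ i)"
    define Qb where "Qb = (\<Prod>i<v. real ?q ^ mu - real ?q ^ i)"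
    have c1: "real (card ?T) * Pa = Qa"
      using arg_cong[OF grass_count[OF E wv], of real] wv vm q
      unfolding Pa_def Qa_def by (simp only: of_nat_mult real_prod_diff)
    have c0: "real (card ?G) * Pb = Qb"
      using arg_cong[OF grass_count0[OF vm, where 'a='a], of real] vm q
      unfolding Pb_def Qb_def by (simp only: of_nat_mult real_prod_diff0 order_refl)
    have Pa_pos: "Pa > 0" unfolding Pa_def using wv q by (intro prod_qdiff_pos) auto
    have Qa_pos: "Qa > 0" unfolding Qa_def using wv vm q by (intro prod_qdiff_pos) auto
    have B_pos: "B > 0" unfolding B_def using prod_qdiff_pos[OF q, of 0 w mu] wv vm by simp
    have A_pos: "A > 0" unfolding A_def using prod_qdiff_pos[OF q, of 0 w v] wv by simp
    have Pb_eq: "Pb = A * Pa"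
      unfolding Pb_def A_def Pa_def using prod_split_nat[where w=w and k="v - w" and f="\<lambda>i. real ?q ^ v - real ?q ^ i"] wv by simp
    have Qb_eq: "Qb = B * Qa"
      unfolding Qb_def B_def Qa_def using prod_split_nat[where w=w and k="v - w" and f="\<lambda>i. real ?q ^ mu - real ?q ^ i"] wv by simp
    have cT: "real (card ?T) = Qa / Pa" using c1 Pa_pos by (simp add: field_simps)
    have cG: "real (card ?G) = B * Qa / (A * Pa)" using c0 Pb_eq Qb_eq Pa_pos A_pos by (simp add: field_simps)
    have "real (card ?T) / real (card ?G) = (Qa / Pa) / (B * Qa / (A * Pa))" by (simp only: cT cG)
    also have "\<dots> = A / B"
      using Pa_pos Qa_pos A_pos B_pos by (simp add: field_simps)
    finally have "real (card ?T) / real (card ?G) = A / B" .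
    then show ?thesis using prob Phi_eq[OF q wv vm] unfolding A_def B_def by simp
  qed
qed

definition rowsp :: "nat \<Rightarrow> nat \<Rightarrow> (nat \<Rightarrow> nat \<Rightarrow> 'a::zero) \<Rightarrow> (nat \<Rightarrow> 'a) set" where
  "rowsp m n X = (\<lambda>r. \<lambda>j. if j < n then X r j else 0) ` {..<m}"

lemma sum_fun_apply: "(\<Sum>b\<in>B. f b) j = (\<Sum>b\<in>B. f b j)" for f :: "'b \<Rightarrow> nat \<Rightarrow> 'a::comm_monoid_add"
  by (induction B rule: infinite_finite_induct) auto

lemma finite_rowsp: "finite (rowsp m n X)" by (simp add: rowsp_def)

lemma rank_le_transpose:
  fixes X :: "nat \<Rightarrow> nat \<Rightarrow> 'a::{field,finite}"
  shows "fvs.dim (rowsp m n X) \<le> fvs.dim (rowsp n m (\<lambda>r c. X c r))"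
proof -
  let ?C = "rowsp n m (\<lambda>r c. X c r)"
  obtain B where B: "B \<subseteq> ?C" "fvs.independent B" "?C \<subseteq> fvs.span B" "card B = fvs.dim ?C"
    by (rule fvs.basis_exists)
  have fB: "finite B" using B(1) finite_rowsp by (rule finite_subset)
  define col where "col j = (\<lambda>r. if r < m then X r j else 0)" for j
  have colC: "col j \<in> ?C" if "j < n" for j using that by (auto simp: rowsp_def col_def)
  have "\<exists>u. col j = (\<Sum>b\<in>B. fscale (u b) b)" if "j < n" for j
  proof -
    have "col j \<in> fvs.span B" using colC[OF that] B(3) by blast
    then show ?thesis unfolding fvs.span_finite[OF fB] by auto
  qed
  then obtain a where a: "\<And>j. j < n \<Longrightarrow> col j = (\<Sum>b\<in>B. fscale (a j b) b)" by metis
  define u where "u b = (\<lambda>j. if j < n then a j b else 0)" for b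
  have rows: "(\<lambda>j. if j < n then X r j else 0) = (\<Sum>b\<in>B. fscale (b r) (u b))" if r: "r < m" for r
  proof
    fix j
    show "(if j < n then X r j else 0) = (\<Sum>b\<in>B. fscale (b r) (u b)) j"
    proof (cases "j < n")
      case True
      have "X r j = col j r" using r by (simp add: col_def)
      also have "\<dots> = (\<Sum>b\<in>B. a j b * b r)" using a[OF True] by (simp add: sum_fun_apply fscale_def)
      finally show ?thesis using True by (simp add: sum_fun_apply fscale_def u_def mult.commute)
    next
      case False
      then show ?thesis by (simp add: sum_fun_apply fscale_def u_def)
    qed
  qed
  have "rowsp m n X \<subseteq> fvs.span (u ` B)"
  proof
    fix x assume "x \<in> rowsp m n X"
    then obtain r where r: "r < m" "x = (\<lambda>j. if j < n then X r j else 0)" by (auto simp: rowsp_def)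
    show "x \<in> fvs.span (u ` B)" unfolding r(2) rows[OF r(1)]
      by (intro fvs.span_sum fvs.span_scale fvs.span_base) auto
  qed
  then have "fvs.dim (rowsp m n X) \<le> card (u ` B)" using fB by (intro fvs.dim_le_card) auto
  also have "\<dots> \<le> card B" using fB by (rule card_image_le)
  finally show ?thesis using B(4) by simp
qed

lemma rank_transpose:
  fixes X :: "nat \<Rightarrow> nat \<Rightarrow> 'a::{field,finite}"
  shows "fvs.dim (rowsp m n X) = fvs.dim (rowsp n m (\<lambda>r c. X c r))"
  using rank_le_transpose[of m n X] rank_le_transpose[of n m "\<lambda>r c. X c r"] by simp

lemma block_rows_eq: "block_rows m eta X i = rowsp m eta (\<lambda>r c. X r (i * eta + c))"
  by (simp add: block_rows_def rowsp_def)

lemma block_cols_eq: "block_cols m eta X i = rowsp eta m (\<lambda>c r. X r (i * eta + c))"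
  by (simp add: block_cols_def rowsp_def)

lemma dim_block_cols: "fvs.dim (block_cols m eta X i) = block_rank m eta (X :: nat \<Rightarrow> nat \<Rightarrow> 'a::{field,finite}) i"
  unfolding block_cols_eq block_rank_def block_rows_eq using rank_transpose[of m eta "\<lambda>r c. X r (i * eta + c)"] by simp

lemma rowsp_sub_Fvec: "rowsp m n X \<subseteq> Fvec n" by (auto simp: rowsp_def Fvec_def)

lemma supp_block_props:
  fixes X :: "nat \<Rightarrow> nat \<Rightarrow> 'a::{field,finite}"
  shows "fvs.subspace (supp_block m eta X i)" "supp_block m eta X i \<subseteq> Fvec (min m eta)"
    "fvs.dim (supp_block m eta X i) = block_rank m eta X i"
proof -
  show "fvs.subspace (supp_block m eta X i)" by (simp add: supp_block_def)
  show "supp_block m eta X i \<subseteq> Fvec (min m eta)"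
  proof (cases "eta \<le> m")
    case True
    then have "min m eta = eta" by simp
    then show ?thesis unfolding supp_block_def block_rows_eq using True
      by (simp only: if_True) (intro fvs.span_minimal rowsp_sub_Fvec subspace_Fvec)
  next
    case False
    then have "min m eta = m" by simp
    then show ?thesis unfolding supp_block_def block_cols_eq using False
      by (simp only: if_False) (intro fvs.span_minimal rowsp_sub_Fvec subspace_Fvec)
  qed
  show "fvs.dim (supp_block m eta X i) = block_rank m eta X i"
    by (simp add: supp_block_def block_rank_def dim_block_cols[unfolded block_rank_def])
qed

lemma card_rowsp_le: "card (rowsp m n X) \<le> m"
proof -
  have "card (rowsp m n X) \<le> card {..<m}" unfolding rowsp_def by (rule card_image_le) simp
  then show ?thesis by simp
qed

lemma block_rank_le: "block_rank m eta (X :: nat \<Rightarrow> nat \<Rightarrow> 'a::{field,finite}) i \<le> min m eta"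
proof -
  have "block_rank m eta X i \<le> m"
    unfolding block_rank_def block_rows_eq
    by (rule order.trans[OF fvs.dim_le_card'[OF finite_rowsp] card_rowsp_le])
  moreover have "block_rank m eta X i \<le> eta"
    unfolding dim_block_cols[symmetric] block_cols_eq
    by (rule order.trans[OF fvs.dim_le_card'[OF finite_rowsp] card_rowsp_le])
  ultimately show ?thesis by simp
qed

definition NN :: "real \<Rightarrow> nat \<Rightarrow> nat \<Rightarrow> real" where
  "NN Q a r = (\<Prod>j<r. Q ^ a - Q ^ j)"

lemma NM_NN: "NM q t e r = NN (real q) e r * NN (real q) t r / NN (real q) r r"
  unfolding NM_def NN_def by (simp add: prod_dividef prod.distrib)

lemma NN_Suc: "NN Q a (Suc r) = NN Q a r * (Q ^ a - Q ^ r)"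
  by (simp add: NN_def)

lemma NN_shift: "NN Q (Suc a) (Suc r) = (Q ^ Suc a - 1) * Q ^ r * NN Q a r"
proof -
  have "NN Q (Suc a) (Suc r) = (Q ^ Suc a - Q ^ 0) * (\<Prod>j<r. Q ^ Suc a - Q ^ Suc j)"
    unfolding NN_def by (rule prod.lessThan_Suc_shift)
  also have "(\<Prod>j<r. Q ^ Suc a - Q ^ Suc j) = (\<Prod>j<r. Q * (Q ^ a - Q ^ j))"
    by (simp add: algebra_simps)
  also have "\<dots> = Q ^ r * NN Q a r" by (simp add: prod.distrib NN_def)
  finally show ?thesis by simp
qed

lemma NN_pos: "Q > 1 \<Longrightarrow> NN Q r r > 0"
  unfolding NN_def by (intro prod_pos) (simp add: power_strict_increasing)

lemma NM_0: "NM q t e 0 = 1" by (simp add: NM_def)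
lemma NM_base: "NM q 0 e (Suc r) = 0" unfolding NM_def prod.lessThan_Suc_shift by simp
lemma NM_big: "e < r \<Longrightarrow> NM q t e r = 0" by (auto simp: NM_def prod_zero_iff)

lemma NM_rec:
  assumes q: "q > 1"
  shows "NM q (Suc t) e (Suc r) = real q ^ Suc r * NM q t e (Suc r) + (real q ^ e - real q ^ r) * NM q t e r"
proof -
  define Q where "Q = real q"
  have Q: "Q > 1" using q by (simp add: Q_def)
  define a where "a = Q ^ t"
  define b where "b = Q ^ r"
  have b0: "b > 0" using Q by (simp add: b_def)
  have d0: "Q * b - 1 > 0"
  proof -
    have "Q ^ Suc r > 1" by (rule one_less_power[OF Q]) simp
    then show ?thesis by (simp add: b_def)
  qed
  have n0: "NN Q r r > 0" using NN_pos[OF Q] .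
  have e1: "NN Q (Suc t) (Suc r) = (Q * a - 1) * b * NN Q t r" by (simp add: NN_shift a_def b_def)
  have e2: "NN Q (Suc r) (Suc r) = (Q * b - 1) * b * NN Q r r" by (simp add: NN_shift b_def)
  have e3: "NN Q t (Suc r) = NN Q t r * (a - b)" by (simp add: NN_Suc a_def b_def)
  have e4: "NN Q e (Suc r) = NN Q e r * (Q ^ e - b)" by (simp add: NN_Suc b_def)
  have "NM q (Suc t) e (Suc r) = NN Q e r * (Q ^ e - b) * ((Q * a - 1) * b * NN Q t r) / ((Q * b - 1) * b * NN Q r r)"
    unfolding NM_NN Q_def[symmetric] e1 e2 e4 ..
  also have "\<dots> = (Q * b) * (NN Q e r * (Q ^ e - b)) * (NN Q t r * (a - b)) / ((Q * b - 1) * b * NN Q r r)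
      + (Q ^ e - b) * (NN Q e r * NN Q t r / NN Q r r)"
    using b0 d0 n0 by (simp add: field_simps)
  also have "\<dots> = real q ^ Suc r * NM q t e (Suc r) + (real q ^ e - real q ^ r) * NM q t e r"
    unfolding NM_NN Q_def[symmetric] e2 e3 e4 by (simp add: b_def)
  finally show ?thesis .
qed

lemma sum_if_const: "finite A \<Longrightarrow> (\<Sum>x\<in>A. if P x then c else 0) = card {x \<in> A. P x} * (c::nat)"
  by (simp add: sum.inter_filter[symmetric])

lemma inner_count:
  fixes R :: "(nat \<Rightarrow> 'a::{field,finite}) set"
  assumes R: "finite R" "R \<subseteq> Fvec e"
  shows "card {x \<in> Fvec e. fvs.dim (insert x R) = r} =
    (if fvs.dim R = r then CARD('a) ^ r else 0) + (if Suc (fvs.dim R) = r then CARD('a) ^ e - CARD('a) ^ fvs.dim R else 0)"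
proof -
  let ?s = "fvs.dim R" and ?q = "CARD('a)"
  have sub: "fvs.span R \<subseteq> Fvec e" using fvs.span_minimal[OF R(2) subspace_Fvec] .
  have fs: "finite (fvs.span R)" using sub finite_Fvec by (rule finite_subset)
  have cs: "card (fvs.span R) = ?q ^ ?s" using card_subspace[OF fvs.subspace_span fs] by simp
  have d: "fvs.dim (insert x R) = (if x \<in> fvs.span R then ?s else Suc ?s)" for x
    using dim_insert_fin[OF R(1)] .
  consider "?s = r" | "Suc ?s = r" | "?s \<noteq> r" "Suc ?s \<noteq> r" by blast
  then show ?thesis
  proof cases
    case 1
    then have "{x \<in> Fvec e. fvs.dim (insert x R) = r} = fvs.span R" using sub d by auto
    then show ?thesis using 1 cs by simp
  next
    case 2
    then have "{x \<in> Fvec e. fvs.dim (insert x R) = r} = Fvec e - fvs.span R" using d by auto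
    then show ?thesis using 2 card_Diff_subset[OF fs sub] card_Fvec[where 'a='a] cs by simp
  next
    case 3
    then have "{x \<in> Fvec e. fvs.dim (insert x R) = r} = {}" using d by auto
    then have "card {x \<in> Fvec e. fvs.dim (insert x R) = r} = 0" by (simp only: card.empty)
    then show ?thesis using 3 by simp
  qed
qed

definition mext :: "nat \<Rightarrow> (nat \<Rightarrow> nat \<Rightarrow> 'a) \<times> (nat \<Rightarrow> 'a) \<Rightarrow> nat \<Rightarrow> nat \<Rightarrow> 'a" where
  "mext t p = (\<lambda>i c. if i = t then snd p c else fst p i c)"

lemma rowsp_mext:
  assumes "Y \<in> Mats t e" "x \<in> Fvec e"
  shows "rowsp (Suc t) e (mext t (Y, x)) = insert x (rowsp t e Y)"
proof -
  have h0: "rowsp (Suc t) e Z = insert (\<lambda>j. if j < e then Z t j else 0) ((\<lambda>i j. if j < e then Z i j else 0) ` {..<t})"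
    for Z :: "nat \<Rightarrow> nat \<Rightarrow> 'a" by (simp add: rowsp_def lessThan_Suc)
  have h1: "(\<lambda>j. if j < e then mext t (Y, x) t j else 0) = x" using assms(2) by (auto simp: Fvec_def fun_eq_iff mext_def)
  have h2: "(\<lambda>i j. if j < e then mext t (Y, x) i j else 0) ` {..<t} = rowsp t e Y"
    unfolding rowsp_def by (intro image_cong refl) (auto simp: mext_def)
  show ?thesis using h0[of "mext t (Y, x)"] h1 h2 by simp
qed

lemma count_step:
  "card {X \<in> (Mats (Suc t) e :: (nat \<Rightarrow> nat \<Rightarrow> 'a::{field,finite}) set). fvs.dim (rowsp (Suc t) e X) = r}
   = CARD('a) ^ r * card {X \<in> (Mats t e :: (nat \<Rightarrow> nat \<Rightarrow> 'a) set). fvs.dim (rowsp t e X) = r}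
     + (case r of 0 \<Rightarrow> 0 | Suc r' \<Rightarrow> (CARD('a) ^ e - CARD('a) ^ r') *
          card {X \<in> (Mats t e :: (nat \<Rightarrow> nat \<Rightarrow> 'a) set). fvs.dim (rowsp t e X) = r'})"
proof -
  let ?q = "CARD('a)"
  let ?M = "Mats t e :: (nat \<Rightarrow> nat \<Rightarrow> 'a) set"
  let ?T = "{X \<in> (Mats (Suc t) e :: (nat \<Rightarrow> nat \<Rightarrow> 'a) set). fvs.dim (rowsp (Suc t) e X) = r}"
  define S where "S = Sigma ?M (\<lambda>Y. {x \<in> Fvec e. fvs.dim (insert x (rowsp t e Y)) = r})"
  have img: "mext t ` S = ?T"
  proof (intro equalityI subsetI)
    fix X assume "X \<in> mext t ` S"
    then obtain Y x where Yx: "Y \<in> ?M" "x \<in> Fvec e" "fvs.dim (insert x (rowsp t e Y)) = r" "X = mext t (Y, x)"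
      by (auto simp: S_def)
    have "X \<in> Mats (Suc t) e" using Yx by (auto simp: Mats_def Fvec_def mext_def)
    then show "X \<in> ?T" using Yx rowsp_mext[OF Yx(1,2)] by simp
  next
    fix X assume X: "X \<in> ?T"
    define Y where "Y = (\<lambda>i c. if i < t then X i c else (0::'a))"
    have Y: "Y \<in> ?M" using X by (auto simp: Y_def Mats_def)
    have x: "X t \<in> Fvec e" using X by (auto simp: Mats_def Fvec_def)
    have XY: "X = mext t (Y, X t)"
      using X by (auto simp: mext_def Y_def fun_eq_iff Mats_def)
    have "(Y, X t) \<in> S" using X Y x rowsp_mext[OF Y x] XY by (auto simp: S_def)
    then show "X \<in> mext t ` S" using XY by blast
  qed
  have inj: "inj_on (mext t) S"
  proof (rule inj_onI)
    fix p p' assume p: "p \<in> S" "p' \<in> S" and eq: "mext t p = mext t p'"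
    obtain Y x Y' x' where pp: "p = (Y, x)" "p' = (Y', x')" by (cases p, cases p')
    have "x = x'" using fun_cong[OF fun_cong[OF eq, of t]] pp by (auto simp: mext_def fun_eq_iff)
    moreover have "Y = Y'"
    proof (intro ext)
      fix i c
      show "Y i c = Y' i c"
      proof (cases "i = t")
        case True then show ?thesis using p pp by (auto simp: S_def Mats_def)
      next
        case False then show ?thesis using fun_cong[OF fun_cong[OF eq, of i], of c] pp by (simp add: mext_def)
      qed
    qed
    ultimately show "p = p'" using pp by simp
  qed
  have "card ?T = card S" using card_image[OF inj] img by simp
  also have "card S = (\<Sum>Y\<in>?M. card {x \<in> Fvec e. fvs.dim (insert x (rowsp t e Y)) = r})"
    unfolding S_def by (rule card_SigmaI) (auto simp: finite_Mats finite_Fvec)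
  also have "\<dots> = (\<Sum>Y\<in>?M. (if fvs.dim (rowsp t e Y) = r then ?q ^ r else 0)
       + (if Suc (fvs.dim (rowsp t e Y)) = r then ?q ^ e - ?q ^ (r - 1) else 0))"
    by (intro sum.cong refl) (auto simp: inner_count[OF finite_rowsp rowsp_sub_Fvec])
  also have "\<dots> = ?q ^ r * card {X \<in> ?M. fvs.dim (rowsp t e X) = r}
       + card {X \<in> ?M. Suc (fvs.dim (rowsp t e X)) = r} * (?q ^ e - ?q ^ (r - 1))"
    by (simp add: sum.distrib sum_if_const finite_Mats)
  also have "card {X \<in> ?M. Suc (fvs.dim (rowsp t e X)) = r} * (?q ^ e - ?q ^ (r - 1)) =
     (case r of 0 \<Rightarrow> 0 | Suc r' \<Rightarrow> (?q ^ e - ?q ^ r') * card {X \<in> ?M. fvs.dim (rowsp t e X) = r'})"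
    by (cases r) auto
  finally show ?thesis .
qed

lemma count_rank:
  "real (card {X \<in> (Mats t e :: (nat \<Rightarrow> nat \<Rightarrow> 'a::{field,finite}) set). fvs.dim (rowsp t e X) = r})
   = NM CARD('a) t e r"
proof (induction t arbitrary: r)
  case 0
  have M0: "(Mats 0 e :: (nat \<Rightarrow> nat \<Rightarrow> 'a) set) = {\<lambda>_ _. 0}" by (auto simp: Mats_def fun_eq_iff)
  have "rowsp 0 e X = {}" for X :: "nat \<Rightarrow> nat \<Rightarrow> 'a" by (simp add: rowsp_def)
  then show ?case using M0
    by (cases r) (auto simp: NM_0 NM_base fvs.dim_eq_card_independent[OF fvs.independent_empty])
next
  case (Suc t)
  let ?q = "CARD('a)"
  have q: "?q > 1" by (rule card_field_gt1)
  show ?case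
  proof (cases r)
    case 0
    then show ?thesis using count_step[of t e 0, where 'a='a] Suc.IH[of 0] by (simp add: NM_0)
  next
    case (Suc r')
    have "real (?q ^ e - ?q ^ r') * NM ?q t e r' = (real ?q ^ e - real ?q ^ r') * NM ?q t e r'"
    proof (cases "r' \<le> e")
      case True
      then have "?q ^ r' \<le> ?q ^ e" using q by (intro power_increasing) auto
      then show ?thesis by (simp add: of_nat_diff)
    next
      case False then show ?thesis by (simp add: NM_big)
    qed
    then show ?thesis using count_step[of t e r, where 'a='a] Suc.IH[of r] Suc.IH[of r'] Suc NM_rec[OF q, of t e r']
      by simp
  qed
qed

lemma int_bnd: "(\<And>x. \<bar>f x\<bar> \<le> B) \<Longrightarrow> integrable (measure_pmf p) (f :: _ \<Rightarrow> real)"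
  by (intro measure_pmf.integrable_const_bound[where B=B]) auto

lemma seq_pmf_Cons: "seq_pmf (p # ps) = bind_pmf p (\<lambda>x. map_pmf ((#) x) (seq_pmf ps))"
  by (simp add: map_pmf_def)

lemma integral_if_const: "(\<integral>x. (if x \<in> A then c else 0) \<partial>measure_pmf p) = c * measure_pmf.prob p A"
proof -
  have "(\<lambda>x. if x \<in> A then c else 0) = (\<lambda>x. c * indicator A x)" by (auto simp: fun_eq_iff indicator_def)
  then show ?thesis by simp
qed

lemma seq_pmf_prod:
  "length ps = n \<Longrightarrow> measure_pmf.prob (seq_pmf ps) {xs. \<forall>i<n. xs ! i \<in> A i} = (\<Prod>i<n. measure_pmf.prob (ps ! i) (A i))"
proof (induction ps arbitrary: n A)
  case Nil
  then show ?case by simp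
next
  case (Cons p ps)
  then obtain n' where n: "n = Suc n'" "length ps = n'" by auto
  let ?c = "measure_pmf.prob (seq_pmf ps) {xs. \<forall>i<n'. xs ! i \<in> A (Suc i)}"
  have pre: "(#) x -` {xs. \<forall>i<n. xs ! i \<in> A i} = (if x \<in> A 0 then {xs. \<forall>i<n'. xs ! i \<in> A (Suc i)} else {})" for x
    using n(1) by (auto simp: less_Suc_eq_0_disj)
  have "measure_pmf.prob (seq_pmf (p # ps)) {xs. \<forall>i<n. xs ! i \<in> A i}
      = (\<integral>x. (if x \<in> A 0 then ?c else 0) \<partial>measure_pmf p)"
    unfolding seq_pmf_Cons prob_bind_pmf measure_map_pmf pre
    by (intro Bochner_Integration.integral_cong refl) simp
  also have "\<dots> = ?c * measure_pmf.prob p (A 0)" by (rule integral_if_const)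
  also have "?c = (\<Prod>i<n'. measure_pmf.prob (ps ! i) (A (Suc i)))" using Cons.IH[OF n(2)] .
  finally have calc: "measure_pmf.prob (seq_pmf (p # ps)) {xs. \<forall>i<n. xs ! i \<in> A i}
      = (\<Prod>i<n'. measure_pmf.prob (ps ! i) (A (Suc i))) * measure_pmf.prob p (A 0)" .
  have eqP: "(\<Prod>i<n. measure_pmf.prob ((p # ps) ! i) (A i)) = measure_pmf.prob p (A 0) * (\<Prod>i<n'. measure_pmf.prob (ps ! i) (A (Suc i)))"
    unfolding n(1) prod.lessThan_Suc_shift by simp
  show ?case unfolding calc eqP by (rule mult.commute)
qed

lemma set_seq_pmf_length: "xs \<in> set_pmf (seq_pmf ps) \<Longrightarrow> length xs = length ps"
  by (induction ps arbitrary: xs) auto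

lemma union_bound_seq:
  "measure_pmf.prob (seq_pmf (replicate N p)) {cs. \<exists>j<length cs. cs ! j \<in> B} \<le> real N * measure_pmf.prob p B"
proof (induction N)
  case 0
  then show ?case by simp
next
  case (Suc N)
  let ?S = "{cs. \<exists>j<length cs. cs ! j \<in> B}"
  let ?c = "measure_pmf.prob (seq_pmf (replicate N p)) ?S"
  have pre: "(#) x -` ?S = (if x \<in> B then UNIV else ?S)" for x
  proof -
    have "(\<exists>j<Suc (length cs). (x # cs) ! j \<in> B) \<longleftrightarrow> x \<in> B \<or> (\<exists>j<length cs. cs ! j \<in> B)" for cs
      by (auto simp: less_Suc_eq_0_disj)
    then show ?thesis by auto
  qed
  have "measure_pmf.prob (seq_pmf (replicate (Suc N) p)) ?S = (\<integral>x. (if x \<in> B then 1 else ?c) \<partial>measure_pmf p)"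
    unfolding replicate_Suc seq_pmf_Cons prob_bind_pmf measure_map_pmf pre
    by (intro Bochner_Integration.integral_cong refl) simp
  also have "\<dots> \<le> (\<integral>x. indicator B x + ?c \<partial>measure_pmf p)"
  proof -
    have c1: "?c \<le> 1" "0 \<le> ?c" by (rule measure_pmf.prob_le_1, rule measure_nonneg)
    show ?thesis
    proof (rule integral_mono[OF int_bnd[where B=1] int_bnd[where B=2]])
      fix x
      show "\<bar>if x \<in> B then 1 else ?c\<bar> \<le> 1" using c1 by simp
      have i01: "0 \<le> (indicator B x :: real)" "(indicator B x :: real) \<le> 1" by (auto simp: indicator_def)
      show "\<bar>indicator B x + ?c\<bar> \<le> 2" unfolding abs_le_iff using c1 i01 by linarith
      show "(if x \<in> B then 1 else ?c) \<le> indicator B x + ?c" using c1 by (simp add: indicator_def)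
    qed
  qed
  also have "\<dots> = measure_pmf.prob p B + ?c"
    by (subst Bochner_Integration.integral_add) (auto intro: int_bnd[where B=1] simp: indicator_def measure_pmf.prob_le_1)
  also have "\<dots> \<le> measure_pmf.prob p B + real N * measure_pmf.prob p B" using Suc.IH by simp
  finally show ?case by (simp add: algebra_simps)
qed

definition blk :: "nat \<Rightarrow> nat \<Rightarrow> nat \<Rightarrow> (nat \<Rightarrow> nat \<Rightarrow> 'a::zero) \<Rightarrow> nat \<Rightarrow> nat \<Rightarrow> 'a" where
  "blk m eta i E = (\<lambda>r c. if r < m \<and> c < eta then E r (i * eta + c) else 0)"

lemma blk_Mats: "blk m eta i E \<in> Mats m eta" by (auto simp: blk_def Mats_def)

lemma rank_blk: "block_rank m eta E i = fvs.dim (rowsp m eta (blk m eta i E))"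
proof -
  have "rowsp m eta (blk m eta i E) = rowsp m eta (\<lambda>r c. E r (i * eta + c))"
    unfolding rowsp_def by (intro image_cong refl) (auto simp: blk_def)
  then show ?thesis by (simp add: block_rank_def block_rows_eq)
qed

lemma profile_count:
  "card {E \<in> (Mats m (l * eta) :: (nat \<Rightarrow> nat \<Rightarrow> 'a::{field,finite}) set). \<forall>i<l. block_rank m eta E i = ws ! i}
   \<le> (\<Prod>i<l. card {X \<in> (Mats m eta :: (nat \<Rightarrow> nat \<Rightarrow> 'a) set). fvs.dim (rowsp m eta X) = ws ! i})"
proof -
  let ?A = "{E \<in> (Mats m (l * eta) :: (nat \<Rightarrow> nat \<Rightarrow> 'a) set). \<forall>i<l. block_rank m eta E i = ws ! i}"
  let ?B = "PiE {..<l} (\<lambda>i. {X \<in> (Mats m eta :: (nat \<Rightarrow> nat \<Rightarrow> 'a) set). fvs.dim (rowsp m eta X) = ws ! i})"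
  define f where "f E = (\<lambda>i\<in>{..<l}. blk m eta i E)" for E :: "nat \<Rightarrow> nat \<Rightarrow> 'a"
  have inj: "inj_on f ?A"
  proof (rule inj_onI)
    fix E E' assume E: "E \<in> ?A" "E' \<in> ?A" and eq: "f E = f E'"
    show "E = E'"
    proof (intro ext)
      fix r c
      show "E r c = E' r c"
      proof (cases "r < m \<and> c < l * eta")
        case True
        then have eta: "eta > 0" by (cases eta) auto
        let ?i = "c div eta" and ?j = "c mod eta"
        have i: "?i < l" using True by (simp add: less_mult_imp_div_less)
        have j: "?j < eta" using eta by simp
        have c: "?i * eta + ?j = c" by simp
        have "blk m eta ?i E = blk m eta ?i E'" using fun_cong[OF eq, of ?i] i by (simp add: f_def)
        then have "blk m eta ?i E r ?j = blk m eta ?i E' r ?j" by simp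
        then show ?thesis using True j c by (simp add: blk_def)
      next
        case False
        then show ?thesis using E by (auto simp: Mats_def not_less)
      qed
    qed
  qed
  have "f ` ?A \<subseteq> ?B" by (auto simp: f_def blk_Mats rank_blk)
  moreover have "finite ?B" by (intro finite_PiE) (auto intro: finite_subset[OF _ finite_Mats])
  ultimately have "card ?A \<le> card ?B" using inj by (intro card_inj_on_le) auto
  also have "card ?B = (\<Prod>i<l. card {X \<in> (Mats m eta :: (nat \<Rightarrow> nat \<Rightarrow> 'a) set). fvs.dim (rowsp m eta X) = ws ! i})"
    by (simp add: card_PiE)
  finally show ?thesis .
qed

lemma profile_count_NM:
  "real (card {E \<in> (Mats m (l * eta) :: (nat \<Rightarrow> nat \<Rightarrow> 'a::{field,finite}) set). \<forall>i<l. block_rank m eta E i = ws ! i})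
   \<le> (\<Prod>i<l. NM CARD('a) m eta (ws ! i))"
proof -
  have "real (card {E \<in> (Mats m (l * eta) :: (nat \<Rightarrow> nat \<Rightarrow> 'a::{field,finite}) set). \<forall>i<l. block_rank m eta E i = ws ! i})
    \<le> real (\<Prod>i<l. card {X \<in> (Mats m eta :: (nat \<Rightarrow> nat \<Rightarrow> 'a) set). fvs.dim (rowsp m eta X) = ws ! i})"
    using profile_count by (rule of_nat_mono)
  also have "\<dots> = (\<Prod>i<l. NM CARD('a) m eta (ws ! i))" by (simp add: count_rank)
  finally show ?thesis .
qed

lemma real_card_filter: "finite M \<Longrightarrow> real (card {c \<in> M. P c}) = (\<Sum>c\<in>M. if P c then 1 else 0)"
proof -
  assume M: "finite M"
  have "card {c \<in> M. P c} = (\<Sum>c\<in>M. if P c then 1 else 0 :: nat)"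
    using sum.inter_filter[OF M, of "\<lambda>_. 1::nat" P] by simp
  then have "real (card {c \<in> M. P c}) = (\<Sum>c\<in>M. real (if P c then 1 else 0::nat))" by (simp only: of_nat_sum)
  also have "\<dots> = (\<Sum>c\<in>M. if P c then 1 else 0)" by (intro sum.cong refl) simp
  finally show ?thesis .
qed

lemma finite_Wset: "finite (Wset w l mu)"
  by (rule finite_subset[OF _ finite_lists_length_eq[of "{..mu}" l]]) (auto simp: Wset_def)

lemma NM_nonneg: "q > 1 \<Longrightarrow> r \<le> m \<Longrightarrow> r \<le> eta \<Longrightarrow> NM q m eta r \<ge> 0"
  unfolding NM_def
proof (rule prod_nonneg)
  fix j assume q: "q > 1" and rm: "r \<le> m" and re: "r \<le> eta" and j: "j \<in> {..<r}"
  have Q: "real q > 1" using q by simp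
  have a: "real q ^ j < real q ^ m" using j rm by (intro power_strict_increasing[OF _ Q]) auto
  have b: "real q ^ j < real q ^ eta" using j re by (intro power_strict_increasing[OF _ Q]) auto
  have c: "real q ^ j < real q ^ r" using j by (intro power_strict_increasing[OF _ Q]) auto
  show "0 \<le> (real q ^ m - real q ^ j) * (real q ^ eta - real q ^ j) / (real q ^ r - real q ^ j)"
    using a b c by (intro divide_nonneg_pos mult_nonneg_nonneg) auto
qed

lemma Phi_nonneg: "q \<ge> 1 \<Longrightarrow> Phi q mu a b \<ge> 0"
  unfolding Phi_def gauss_binom_def
  by (auto intro!: divide_nonneg_nonneg prod_nonneg simp: one_le_power)

lemma prof_in_Wset:
  assumes "wt_SR m eta l E = w"
  shows "map (block_rank m eta (E :: nat \<Rightarrow> nat \<Rightarrow> 'a::{field,finite})) [0..<l] \<in> Wset w l (min m eta)"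
proof -
  have "sum_list (map (block_rank m eta E) [0..<l]) = w"
    using assms unfolding wt_SR_def
    by (simp add: sum_set_upt_conv_sum_list_nat[symmetric] atLeast0LessThan)
  then show ?thesis unfolding Wset_def using block_rank_le[of m eta E] by auto
qed

theorem mainTheorem4:
  fixes alpha :: "nat list pmf" and Y :: "nat \<Rightarrow> nat \<Rightarrow> 'a::{field,finite}"
    and m eta l k w v :: nat
  defines "q \<equiv> CARD('a)"
  defines "n \<equiv> l * eta"
  defines "mu \<equiv> min m eta"
  assumes "m \<ge> 1" "eta \<ge> 1" "l \<ge> 1" "k \<ge> 1"
    and "w \<le> v" "v \<le> l * mu"
    and "set_pmf alpha \<subseteq> Wset v l mu"
    and "Y \<in> Mats m n"
  shows "measure_pmf.prob (exp_dist alpha mu m n (q ^ (m * k) - 1))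
           {(Fs, cs). \<exists>j < length cs.
              (let E = (\<lambda>r c. Y r c - (cs ! j) r c) in
                 wt_SR m eta l E = w \<and> (\<forall>i<l. supp_block m eta E i \<subseteq> Fs ! i))}
         \<le> real q powi (int m * (int k - int n)) *
           (\<Sum>ws\<in>Wset w l mu.
              (\<Sum>vs\<in>Wset v l mu. pmf alpha vs * (\<Prod>i<l. Phi q mu (ws ! i) (vs ! i)))
              * (\<Prod>i<l. NM q m eta (ws ! i)))"
proof -
  note alph = assms(10) and YM = assms(11)
  have q1: "q > 1" unfolding q_def by (rule card_field_gt1)
  define M where "M = (Mats m n :: (nat \<Rightarrow> nat \<Rightarrow> 'a) set)"
  define N where "N = q ^ (m * k) - 1"
  define sub where "sub c = (\<lambda>r c'. Y r c' - c r c')" for c :: "nat \<Rightarrow> nat \<Rightarrow> 'a"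
  define good where "good Fs c = (wt_SR m eta l (sub c) = w \<and> (\<forall>i<l. supp_block m eta (sub c) i \<subseteq> Fs ! i))"
    for Fs :: "(nat \<Rightarrow> 'a) set list" and c
  define seqF where "seqF vs = seq_pmf (map (\<lambda>d. pmf_of_set (Grass mu d :: (nat \<Rightarrow> 'a) set set)) vs)" for vs
  define seqC where "seqC = seq_pmf (replicate N (pmf_of_set M))"
  define hh where "hh vs = (\<integral>Fs. measure_pmf.prob seqC {cs. \<exists>j<length cs. good Fs (cs ! j)} \<partial>seqF vs)" for vs
  define PP where "PP vs E = (if wt_SR m eta l E = w then (\<Prod>i<l. Phi q mu (block_rank m eta E i) (vs ! i)) else 0)"
    for vs and E :: "nat \<Rightarrow> nat \<Rightarrow> 'a"
  define H where "H vs = real N / real (card M) * (\<Sum>E\<in>M. PP vs E)" for vs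
  define prof where "prof E = map (block_rank m eta E) [0..<l]" for E :: "nat \<Rightarrow> nat \<Rightarrow> 'a"
  define phibar where "phibar ws = (\<Sum>vs\<in>Wset v l mu. pmf alpha vs * (\<Prod>i<l. Phi q mu (ws ! i) (vs ! i)))" for ws
  let ?Ev = "{(Fs, cs). \<exists>j < length cs.
              (let E = (\<lambda>r c. Y r c - (cs ! j) r c) in
                 wt_SR m eta l E = w \<and> (\<forall>i<l. supp_block m eta E i \<subseteq> Fs ! i))}"
  have finM: "finite M" unfolding M_def by (rule finite_Mats)
  have cardM: "card M = q ^ (m * n)" unfolding M_def q_def by (rule card_Mats)
  have MnE: "M \<noteq> {}" using YM M_def by auto

  have phinn: "0 \<le> phibar ws" for ws
    unfolding phibar_def using q1 by (intro sum_nonneg mult_nonneg_nonneg prod_nonneg Phi_nonneg) (auto simp: pmf_nonneg)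
  have stepA: "measure_pmf.prob (exp_dist alpha mu m n (q ^ (m * k) - 1)) ?Ev = (\<integral>vs. hh vs \<partial>alpha)"
  proof -
    have e1: "exp_dist alpha mu m n (q ^ (m * k) - 1) = bind_pmf alpha (\<lambda>vs. bind_pmf (seqF vs) (\<lambda>Fs. map_pmf (Pair Fs) seqC))"
      unfolding exp_dist_def seqF_def seqC_def N_def M_def map_pmf_def ..
    have pre: "Pair Fs -` ?Ev = {cs. \<exists>j<length cs. good Fs (cs ! j)}" for Fs
      by (auto simp: good_def sub_def Let_def)
    show ?thesis unfolding e1 prob_bind_pmf measure_map_pmf pre hh_def ..
  qed
  have subM: "sub c \<in> M" if "c \<in> M" for c
    using that YM unfolding M_def Mats_def sub_def by auto
  have subsub: "sub (sub c) = c" for c by (simp add: sub_def)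
  have stepB: "hh vs \<le> H vs" if vs: "vs \<in> set_pmf alpha" for vs
  proof -
    have vsW: "length vs = l" "\<And>x. x \<in> set vs \<Longrightarrow> x \<le> mu" using vs alph by (auto simp: Wset_def)
    let ?I = "\<lambda>c. indicator {Fs. good Fs c} :: (nat \<Rightarrow> 'a) set list \<Rightarrow> real"
    have B1: "measure_pmf.prob seqC {cs. \<exists>j<length cs. good Fs (cs ! j)} \<le> real N * measure_pmf.prob (pmf_of_set M) {c. good Fs c}" for Fs
      unfolding seqC_def using union_bound_seq[of N "pmf_of_set M" "{c. good Fs c}"] by simp
    have B2: "measure_pmf.prob (pmf_of_set M) {c. good Fs c} = (\<Sum>c\<in>M. ?I c Fs) / real (card M)" for Fs
    proof -
      have "M \<inter> {c. good Fs c} = {c \<in> M. good Fs c}" by auto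
      then show ?thesis using measure_pmf_of_set[OF MnE finM, of "{c. good Fs c}"] real_card_filter[OF finM, of "good Fs"]
        by (simp add: indicator_def of_bool_def)
    qed
    have intI: "integrable (measure_pmf (seqF vs)) (?I c)" for c
      by (rule int_bnd[where B=1]) (simp add: indicator_def)
    have "hh vs \<le> (\<integral>Fs. real N / real (card M) * (\<Sum>c\<in>M. ?I c Fs) \<partial>seqF vs)"
      unfolding hh_def
    proof (rule integral_mono[OF int_bnd[where B=1]])
      show "integrable (measure_pmf (seqF vs)) (\<lambda>Fs. real N / real (card M) * (\<Sum>c\<in>M. ?I c Fs))"
        using intI by (intro Bochner_Integration.integrable_mult_right Bochner_Integration.integrable_sum) auto
      fix Fs
      show "\<bar>measure_pmf.prob seqC {cs. \<exists>j<length cs. good Fs (cs ! j)}\<bar> \<le> 1" by simp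
      show "measure_pmf.prob seqC {cs. \<exists>j<length cs. good Fs (cs ! j)} \<le> real N / real (card M) * (\<Sum>c\<in>M. ?I c Fs)"
        using B1[of Fs] B2[of Fs] by simp
    qed
    also have "\<dots> = real N / real (card M) * (\<Sum>c\<in>M. measure_pmf.prob (seqF vs) {Fs. good Fs c})"
      using intI by (simp add: Bochner_Integration.integral_sum)
    also have "(\<Sum>c\<in>M. measure_pmf.prob (seqF vs) {Fs. good Fs c}) = (\<Sum>c\<in>M. PP vs (sub c))"
    proof (intro sum.cong refl)
      fix c assume c: "c \<in> M"
      show "measure_pmf.prob (seqF vs) {Fs. good Fs c} = PP vs (sub c)"
      proof (cases "wt_SR m eta l (sub c) = w")
        case False
        then have "{Fs. good Fs c} = {}" by (simp add: good_def)
        then show ?thesis using False by (simp add: PP_def)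
      next
        case True
        let ?S = "\<lambda>i. {F. supp_block m eta (sub c) i \<subseteq> F}"
        have "{Fs. good Fs c} = {Fs. \<forall>i<l. Fs ! i \<in> ?S i}" using True by (simp add: good_def)
        then have "measure_pmf.prob (seqF vs) {Fs. good Fs c}
            = (\<Prod>i<l. measure_pmf.prob (map (\<lambda>d. pmf_of_set (Grass mu d :: (nat \<Rightarrow> 'a) set set)) vs ! i) (?S i))"
          unfolding seqF_def using seq_pmf_prod[of "map (\<lambda>d. pmf_of_set (Grass mu d :: (nat \<Rightarrow> 'a) set set)) vs" l ?S] vsW(1)
          by simp
        also have "\<dots> = (\<Prod>i<l. Phi q mu (block_rank m eta (sub c) i) (vs ! i))"
        proof (intro prod.cong refl)
          fix i assume i: "i \<in> {..<l}"
          have vi: "vs ! i \<le> mu" using vsW i by (auto intro: nth_mem)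
          show "measure_pmf.prob (map (\<lambda>d. pmf_of_set (Grass mu d :: (nat \<Rightarrow> 'a) set set)) vs ! i) (?S i)
              = Phi q mu (block_rank m eta (sub c) i) (vs ! i)"
            using i vsW(1) grass_prob[OF supp_block_props(1)[of m eta "sub c" i] supp_block_props(2)[of m eta "sub c" i, folded mu_def] supp_block_props(3)[of m eta "sub c" i] vi]
            unfolding q_def by simp
        qed
        finally show ?thesis using True by (simp add: PP_def)
      qed
    qed
    also have "(\<Sum>c\<in>M. PP vs (sub c)) = (\<Sum>E\<in>M. PP vs E)"
      by (rule sum.reindex_bij_witness[where i=sub and j=sub]) (auto simp: subsub subM)
    finally show ?thesis unfolding H_def .
  qed
  have stepC: "(\<integral>vs. hh vs \<partial>alpha) \<le> (\<Sum>vs\<in>Wset v l mu. H vs * pmf alpha vs)"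
  proof -
    have "(\<integral>vs. hh vs \<partial>alpha) = (\<Sum>vs\<in>Wset v l mu. hh vs * pmf alpha vs)"
      by (rule integral_measure_pmf_real[OF finite_Wset]) (use alph in blast)
    also have "\<dots> \<le> (\<Sum>vs\<in>Wset v l mu. H vs * pmf alpha vs)"
    proof (rule sum_mono)
      fix vs assume "vs \<in> Wset v l mu"
      show "hh vs * pmf alpha vs \<le> H vs * pmf alpha vs"
      proof (cases "vs \<in> set_pmf alpha")
        case True
        then show ?thesis using stepB[OF True] by (intro mult_right_mono) (auto simp: pmf_nonneg)
      next
        case False
        then have "pmf alpha vs = 0" by (simp add: set_pmf_iff)
        then show ?thesis by simp
      qed
    qed
    finally show ?thesis .
  qed
  have stepD: "(\<Sum>vs\<in>Wset v l mu. H vs * pmf alpha vs)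
      = real N / real (card M) * (\<Sum>E\<in>M. if wt_SR m eta l E = w then phibar (prof E) else 0)"
  proof -
    have inner: "(\<Sum>vs\<in>Wset v l mu. PP vs E * pmf alpha vs) = (if wt_SR m eta l E = w then phibar (prof E) else 0)"
      for E
    proof (cases "wt_SR m eta l E = w")
      case True
      have pe: "(\<Prod>i<l. Phi q mu (block_rank m eta E i) (vs ! i)) = (\<Prod>i<l. Phi q mu (prof E ! i) (vs ! i))" for vs
        by (intro prod.cong refl) (simp add: prof_def)
      show ?thesis using True unfolding PP_def phibar_def by (simp add: pe mult.commute)
    next
      case False
      then show ?thesis unfolding PP_def by simp
    qed
    have "(\<Sum>vs\<in>Wset v l mu. H vs * pmf alpha vs)
        = (\<Sum>vs\<in>Wset v l mu. real N / real (card M) * (\<Sum>E\<in>M. PP vs E * pmf alpha vs))"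
      unfolding H_def by (simp add: sum_distrib_right mult.assoc)
    also have "\<dots> = real N / real (card M) * (\<Sum>vs\<in>Wset v l mu. \<Sum>E\<in>M. PP vs E * pmf alpha vs)"
      by (simp only: sum_distrib_left)
    also have "\<dots> = real N / real (card M) * (\<Sum>E\<in>M. \<Sum>vs\<in>Wset v l mu. PP vs E * pmf alpha vs)"
      by (subst sum.swap) (rule refl)
    also have "\<dots> = real N / real (card M) * (\<Sum>E\<in>M. if wt_SR m eta l E = w then phibar (prof E) else 0)"
      by (simp add: inner)
    finally show ?thesis .
  qed
  have stepE: "(\<Sum>E\<in>M. if wt_SR m eta l E = w then phibar (prof E) else 0)
      \<le> (\<Sum>ws\<in>Wset w l mu. phibar ws * (\<Prod>i<l. NM q m eta (ws ! i)))"
  proof -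
    define Mw where "Mw = {E \<in> M. wt_SR m eta l E = w}"
    have fMw: "finite Mw" using finM by (simp add: Mw_def)
    have "(\<Sum>E\<in>M. if wt_SR m eta l E = w then phibar (prof E) else 0) = (\<Sum>E\<in>Mw. phibar (prof E))"
      unfolding Mw_def by (rule sum.inter_filter[OF finM, symmetric])
    also have "\<dots> = (\<Sum>ws\<in>Wset w l mu. \<Sum>E\<in>{E \<in> Mw. prof E = ws}. phibar (prof E))"
    proof (rule sum.group[symmetric, OF fMw finite_Wset])
      show "prof ` Mw \<subseteq> Wset w l mu" unfolding Mw_def prof_def mu_def using prof_in_Wset by blast
    qed
    also have "\<dots> = (\<Sum>ws\<in>Wset w l mu. phibar ws * real (card {E \<in> Mw. prof E = ws}))"
      by (intro sum.cong refl) simp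
    also have "\<dots> \<le> (\<Sum>ws\<in>Wset w l mu. phibar ws * (\<Prod>i<l. NM q m eta (ws ! i)))"
    proof (intro sum_mono mult_left_mono phinn)
      fix ws assume ws: "ws \<in> Wset w l mu"
      have sub1: "{E \<in> Mw. prof E = ws} \<subseteq> {E \<in> (Mats m (l * eta) :: (nat \<Rightarrow> nat \<Rightarrow> 'a) set). \<forall>i<l. block_rank m eta E i = ws ! i}"
        unfolding Mw_def M_def n_def prof_def by auto
      have "real (card {E \<in> Mw. prof E = ws})
          \<le> real (card {E \<in> (Mats m (l * eta) :: (nat \<Rightarrow> nat \<Rightarrow> 'a) set). \<forall>i<l. block_rank m eta E i = ws ! i})"
        by (intro of_nat_mono card_mono finite_subset[OF _ finite_Mats[of m "l * eta"]] sub1) auto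
      also have "\<dots> \<le> (\<Prod>i<l. NM q m eta (ws ! i))" unfolding q_def by (rule profile_count_NM)
      finally show "real (card {E \<in> Mw. prof E = ws}) \<le> (\<Prod>i<l. NM q m eta (ws ! i))" .
    qed
    finally show ?thesis .
  qed
  have stepF: "real N / real (card M) \<le> real q powi (int m * (int k - int n))"
  proof -
    have e: "int m * (int k - int n) = int (m * k) - int (m * n)" by (simp add: algebra_simps)
    have pw: "real q powi (int m * (int k - int n)) = real q ^ (m * k) / real q ^ (m * n)"
    proof -
      have "real q powi (int (m * k) - int (m * n)) = real q powi (int (m * k)) / real q powi (int (m * n))"
        using q1 by (intro power_int_diff) auto
      then show ?thesis by (simp only: e power_int_of_nat)
    qed
    have "real N \<le> real q ^ (m * k)" unfolding N_def by (simp add: of_nat_diff)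
    then have "real N / real (card M) \<le> real q ^ (m * k) / real q ^ (m * n)"
      unfolding cardM of_nat_power by (rule divide_right_mono) auto
    then show ?thesis using pw by simp
  qed
  have Snn: "0 \<le> (\<Sum>ws\<in>Wset w l mu. phibar ws * (\<Prod>i<l. NM q m eta (ws ! i)))"
  proof (intro sum_nonneg mult_nonneg_nonneg prod_nonneg phinn)
    fix ws i assume ws: "ws \<in> Wset w l mu" and i: "i \<in> {..<l}"
    then have "ws ! i \<le> mu" unfolding Wset_def by (auto intro: nth_mem)
    then show "0 \<le> NM q m eta (ws ! i)" using q1 by (intro NM_nonneg) (auto simp: mu_def)
  qed
  have Nnn: "0 \<le> real N / real (card M)" by simp
  have h1: "measure_pmf.prob (exp_dist alpha mu m n (q ^ (m * k) - 1)) ?Ev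
      \<le> real N / real (card M) * (\<Sum>E\<in>M. if wt_SR m eta l E = w then phibar (prof E) else 0)"
    using stepC unfolding stepA stepD .
  have h2: "real N / real (card M) * (\<Sum>E\<in>M. if wt_SR m eta l E = w then phibar (prof E) else 0)
      \<le> real N / real (card M) * (\<Sum>ws\<in>Wset w l mu. phibar ws * (\<Prod>i<l. NM q m eta (ws ! i)))"
    using mult_left_mono[OF stepE Nnn] .
  have h3: "real N / real (card M) * (\<Sum>ws\<in>Wset w l mu. phibar ws * (\<Prod>i<l. NM q m eta (ws ! i)))
      \<le> real q powi (int m * (int k - int n)) * (\<Sum>ws\<in>Wset w l mu. phibar ws * (\<Prod>i<l. NM q m eta (ws ! i)))"
    using mult_right_mono[OF stepF Snn] .
  have fin: "measure_pmf.prob (exp_dist alpha mu m n (q ^ (m * k) - 1)) ?Ev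
      \<le> real q powi (int m * (int k - int n)) * (\<Sum>ws\<in>Wset w l mu. phibar ws * (\<Prod>i<l. NM q m eta (ws ! i)))"
    by (rule order_trans[OF h1 order_trans[OF h2 h3]])
  show ?thesis using fin unfolding phibar_def by simp
qed

end
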